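(* In the setting below, the associator obtained by twisting the trivial associator of $H$ by $\mathbb J$, namely $\Phi:=(1\otimes\mathbb J)(\mathrm{id}\otimes\Delta)(\mathbb J)(\Delta\otimes\mathrm{id})(\mathbb J^{-1})(\mathbb J^{-1}\otimes1)$, is given by $$\Phi=\sum_{\beta,\gamma,\delta\in\mathbb{Z}_n^m}\Bigl(\prod_{i,j=1}^m q^{a_{ij}\beta_i((\gamma_j+\delta_j)'-\gamma_j-\delta_j)}\Bigr)\mathbf 1_\beta\otimes\mathbf 1_\gamma\otimes\mathbf 1_\delta,$$ where $\{\mathbf 1_\beta\mid\beta\in\mathbb{Z}_n^m\}$ are the primitive idempotents of the group algebra $\mathbb{C}[g_1^n,\dots,g_m^n]\cong\mathbb{C}[\mathbb{Z}_n^m]$ with $\mathbf 1_\beta g_i^n=q^{n\beta_i}\mathbf 1_\beta$, the components of $\beta,\gamma,\delta$ are regarded as integers in $\{0,\dots,n-1\}$, and $(\gamma_j+\delta_j)'$ is the remainder of $\gamma_j+\delta_j$ modulo $n$. In particular $\Phi\in A\otimes A\otimes A$.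
   Context: Setting: $n\ge2$, $q$ a primitive root of unity of order $n^2$, $m\ge1$; $H$ a finite dimensional Hopf algebra over $\mathbb{C}$ generated by grouplike $g_1,\dots,g_m$ and $e_1,\dots,e_m$ with $g_i^{n^2}=1$, $g_ig_j=g_jg_i$, $g_ie_jg_i^{-1}=q^{\delta_{ij}}e_j$, $\Delta(e_i)=e_i\otimes K_i+1\otimes e_i$, $K_i=\prod_jg_j^{a_{ij}}$, $a_{ij}\in\mathbb{Z}_{n^2}$; $H$ projects onto $\mathbb{C}[(\mathbb{Z}_{n^2})^m]$ via $g_i\mapsto g_i$, $e_i\mapsto0$. $A\subset H$ is the subalgebra generated by the $g_i^n$ and $e_i$. $\{1_\beta\mid\beta\in(\mathbb{Z}_{n^2})^m\}$ are the primitive idempotents of $\mathbb{C}[g_1,\dots,g_m]$ with $1_\beta g_i=q^{\beta_i}1_\beta$. For $z,y\in\mathbb{Z}_{n^2}$ represented in $\{0,\dots,n^2-1\}$, $c(z,y)=q^{-z(y-y')}$ with $y'$ the remainder of $y$ mod $n$, and $\mathbb J=\sum_{\beta,\gamma\in(\mathbb{Z}_{n^2})^m}\prod_{i,j}c(\beta_i,\gamma_j)^{a_{ij}}1_\beta\otimes1_\gamma$. *)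

theory Defs
  imports Complex_Main
begin

text \<open>
G = (Z_N)^m with N = n^2 is represented by integer vectors
x :: nat \<Rightarrow> int with 0 \<le> x i < N for i < m and x i = 0 for i \<ge> m.
The group algebra C[G] is represented by coefficient functions
G \<Rightarrow> complex in the basis of group elements (zero outside G);
C[G]^{\<otimes>2} = C[G\<times>G] and C[G]^{\<otimes>3} = C[G\<times>G\<times>G] likewise, with
convolution as multiplication.  The generator g_i is the unit vector e_i.
\<close>

definition Gset :: "int \<Rightarrow> nat \<Rightarrow> (nat \<Rightarrow> int) set" where
  "Gset N m = {x. (\<forall>i<m. 0 \<le> x i \<and> x i < N) \<and> (\<forall>i. m \<le> i \<longrightarrow> x i = 0)}"

definition vsub :: "int \<Rightarrow> (nat \<Rightarrow> int) \<Rightarrow> (nat \<Rightarrow> int) \<Rightarrow> (nat \<Rightarrow> int)" where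
  "vsub N x y = (\<lambda>i. (x i - y i) mod N)"

definition zerov :: "nat \<Rightarrow> int" where
  "zerov = (\<lambda>i. 0)"

definition gelem :: "'g \<Rightarrow> 'g \<Rightarrow> complex" where
  "gelem g = (\<lambda>y. if y = g then 1 else 0)"

definition conv :: "'g set \<Rightarrow> ('g \<Rightarrow> 'g \<Rightarrow> 'g) \<Rightarrow> ('g \<Rightarrow> complex) \<Rightarrow> ('g \<Rightarrow> complex) \<Rightarrow> 'g \<Rightarrow> complex" where
  "conv C sub f g x = (if x \<in> C then (\<Sum>y\<in>C. f y * g (sub x y)) else 0)"

definition mult2 :: "int \<Rightarrow> nat \<Rightarrow> ((nat \<Rightarrow> int) \<times> (nat \<Rightarrow> int) \<Rightarrow> complex)
     \<Rightarrow> ((nat \<Rightarrow> int) \<times> (nat \<Rightarrow> int) \<Rightarrow> complex) \<Rightarrow> ((nat \<Rightarrow> int) \<times> (nat \<Rightarrow> int) \<Rightarrow> complex)" where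
  "mult2 N m = conv (Gset N m \<times> Gset N m)
      (\<lambda>(x1, x2) (y1, y2). (vsub N x1 y1, vsub N x2 y2))"

definition mult3 :: "int \<Rightarrow> nat \<Rightarrow> ((nat \<Rightarrow> int) \<times> (nat \<Rightarrow> int) \<times> (nat \<Rightarrow> int) \<Rightarrow> complex)
     \<Rightarrow> ((nat \<Rightarrow> int) \<times> (nat \<Rightarrow> int) \<times> (nat \<Rightarrow> int) \<Rightarrow> complex)
     \<Rightarrow> ((nat \<Rightarrow> int) \<times> (nat \<Rightarrow> int) \<times> (nat \<Rightarrow> int) \<Rightarrow> complex)" where
  "mult3 N m = conv (Gset N m \<times> Gset N m \<times> Gset N m)
      (\<lambda>(x1, x2, x3) (y1, y2, y3). (vsub N x1 y1, vsub N x2 y2, vsub N x3 y3))"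

definition inv2 :: "int \<Rightarrow> nat \<Rightarrow> ((nat \<Rightarrow> int) \<times> (nat \<Rightarrow> int) \<Rightarrow> complex)
     \<Rightarrow> ((nat \<Rightarrow> int) \<times> (nat \<Rightarrow> int) \<Rightarrow> complex)" where
  "inv2 N m J = (THE K. (\<forall>x. x \<notin> Gset N m \<times> Gset N m \<longrightarrow> K x = 0)
                    \<and> mult2 N m J K = gelem (zerov, zerov)
                    \<and> mult2 N m K J = gelem (zerov, zerov))"

definition one_tensor :: "((nat \<Rightarrow> int) \<times> (nat \<Rightarrow> int) \<Rightarrow> complex)
     \<Rightarrow> ((nat \<Rightarrow> int) \<times> (nat \<Rightarrow> int) \<times> (nat \<Rightarrow> int) \<Rightarrow> complex)" where
  "one_tensor X = (\<lambda>(x, y, z). gelem zerov x * X (y, z))"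

definition tensor_one :: "((nat \<Rightarrow> int) \<times> (nat \<Rightarrow> int) \<Rightarrow> complex)
     \<Rightarrow> ((nat \<Rightarrow> int) \<times> (nat \<Rightarrow> int) \<times> (nat \<Rightarrow> int) \<Rightarrow> complex)" where
  "tensor_one X = (\<lambda>(x, y, z). X (x, y) * gelem zerov z)"

text \<open>(id \<otimes> \<Delta>) and (\<Delta> \<otimes> id), the linear extensions of
  g \<otimes> h \<mapsto> g \<otimes> h \<otimes> h and g \<otimes> h \<mapsto> g \<otimes> g \<otimes> h (group elements are grouplike)\<close>
definition id_Delta :: "((nat \<Rightarrow> int) \<times> (nat \<Rightarrow> int) \<Rightarrow> complex)
     \<Rightarrow> ((nat \<Rightarrow> int) \<times> (nat \<Rightarrow> int) \<times> (nat \<Rightarrow> int) \<Rightarrow> complex)" where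
  "id_Delta X = (\<lambda>(x, y, z). if y = z then X (x, y) else 0)"

definition Delta_id :: "((nat \<Rightarrow> int) \<times> (nat \<Rightarrow> int) \<Rightarrow> complex)
     \<Rightarrow> ((nat \<Rightarrow> int) \<times> (nat \<Rightarrow> int) \<times> (nat \<Rightarrow> int) \<Rightarrow> complex)" where
  "Delta_id X = (\<lambda>(x, y, z). if x = y then X (x, z) else 0)"

definition dotp :: "nat \<Rightarrow> (nat \<Rightarrow> int) \<Rightarrow> (nat \<Rightarrow> int) \<Rightarrow> int" where
  "dotp m b g = (\<Sum>i<m. b i * g i)"

text \<open>primitive idempotents 1_\<beta> of C[g_1,...,g_m] = C[(Z_{n^2})^m], \<beta> \<in> (Z_{n^2})^m:
  1_\<beta> = n^{-2m} \<Sum>_g q^{-\<beta>\<cdot>g} g, so that 1_\<beta> g_i = q^{\<beta>_i} 1_\<beta>\<close>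
definition bigidem :: "complex \<Rightarrow> nat \<Rightarrow> nat \<Rightarrow> (nat \<Rightarrow> int) \<Rightarrow> (nat \<Rightarrow> int) \<Rightarrow> complex" where
  "bigidem q n m b = (\<lambda>x. \<Sum>g\<in>Gset (int n ^ 2) m.
       (q powi (- dotp m b g)) / (of_nat n ^ (2 * m)) * gelem g x)"

text \<open>primitive idempotents \<one>_\<beta> of C[g_1^n,...,g_m^n] = C[(Z_n)^m], \<beta> \<in> (Z_n)^m:
  \<one>_\<beta> = n^{-m} \<Sum>_h q^{-n \<beta>\<cdot>h} (g^n)^h, so that \<one>_\<beta> g_i^n = q^{n \<beta>_i} \<one>_\<beta>\<close>
definition smallidem :: "complex \<Rightarrow> nat \<Rightarrow> nat \<Rightarrow> (nat \<Rightarrow> int) \<Rightarrow> (nat \<Rightarrow> int) \<Rightarrow> complex" where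
  "smallidem q n m b = (\<lambda>x. \<Sum>h\<in>Gset (int n) m.
       (q powi (- (int n * dotp m b h))) / (of_nat n ^ m) * gelem (\<lambda>i. int n * h i) x)"

definition cfun :: "complex \<Rightarrow> nat \<Rightarrow> int \<Rightarrow> int \<Rightarrow> complex" where
  "cfun q n z y = q powi (- z * (y - y mod int n))"

definition Jtw :: "complex \<Rightarrow> nat \<Rightarrow> nat \<Rightarrow> (nat \<Rightarrow> nat \<Rightarrow> int)
     \<Rightarrow> ((nat \<Rightarrow> int) \<times> (nat \<Rightarrow> int) \<Rightarrow> complex)" where
  "Jtw q n m a = (\<lambda>(x, y). \<Sum>b\<in>Gset (int n ^ 2) m. \<Sum>c\<in>Gset (int n ^ 2) m.
       (\<Prod>i<m. \<Prod>j<m. cfun q n (b i) (c j) powi a i j) * bigidem q n m b x * bigidem q n m c y)"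

definition Phi :: "complex \<Rightarrow> nat \<Rightarrow> nat \<Rightarrow> (nat \<Rightarrow> nat \<Rightarrow> int)
     \<Rightarrow> ((nat \<Rightarrow> int) \<times> (nat \<Rightarrow> int) \<times> (nat \<Rightarrow> int) \<Rightarrow> complex)" where
  "Phi q n m a = (let N = int n ^ 2; J = Jtw q n m a; Ji = inv2 N m J in
      mult3 N m (mult3 N m (mult3 N m (one_tensor J) (id_Delta J)) (Delta_id Ji)) (tensor_one Ji))"

end

theory Submission
  imports Defs
begin

lemma gelem_sum:
  "finite A \<Longrightarrow> (\<Sum>g\<in>A. c g * gelem g x) = (if x \<in> A then c x else 0)"
  unfolding gelem_def by (simp add: if_distrib sum.delta' cong: if_cong)

lemma powi_sum:
  fixes q :: complex
  assumes "q \<noteq> 0"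
  shows "q powi (sum f A) = (\<Prod>i\<in>A. q powi f i)"
proof (induction A rule: infinite_finite_induct)
  case (insert x F)
  then show ?case using assms by (simp add: power_int_add)
qed auto

lemma Gset_Suc:
  "Gset K (Suc m) = (\<lambda>(y, v). y(m := v)) ` (Gset K m \<times> {0..<K})"
proof (intro set_eqI iffI)
  fix x assume x: "x \<in> Gset K (Suc m)"
  have "x = (\<lambda>(y, v). y(m := v)) (x(m := 0), x m)" by auto
  moreover have "(x(m := 0), x m) \<in> Gset K m \<times> {0..<K}"
    using x unfolding Gset_def by auto
  ultimately show "x \<in> (\<lambda>(y, v). y(m := v)) ` (Gset K m \<times> {0..<K})" by blast
next
  fix x assume "x \<in> (\<lambda>(y, v). y(m := v)) ` (Gset K m \<times> {0..<K})"
  then show "x \<in> Gset K (Suc m)" unfolding Gset_def by (auto simp: less_Suc_eq)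
qed

lemma Gset_0: "Gset K 0 = {\<lambda>i. 0}"
  unfolding Gset_def by auto

lemma finite_Gset: "finite (Gset K m)"
  by (induction m) (auto simp: Gset_Suc Gset_0)

lemma inj_upd: "inj_on (\<lambda>(y, v). y(m := v)) (Gset K m \<times> {0..<K})"
proof (rule inj_onI, clarsimp)
  fix y v y' v'
  assume y: "y \<in> Gset K m" and y': "y' \<in> Gset K m" and e: "y(m := v) = y'(m := v')"
  have "v = v'" using fun_cong[OF e, of m] by simp
  moreover have "y = y'"
  proof
    fix i show "y i = y' i"
      using fun_cong[OF e, of i] y y' unfolding Gset_def by (cases "i = m") auto
  qed
  ultimately show "y = y' \<and> v = v'" by simp
qed

lemma sum_times_split:
  "sum h (A \<times> B) = (\<Sum>a\<in>A. \<Sum>b\<in>B. h (a, b))"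
  by (simp add: sum.cartesian_product)

lemma sum_Gset_prod:
  "(\<Sum>y\<in>Gset K m. \<Prod>i<m. g i (y i)) = (\<Prod>i<m. \<Sum>v\<in>{0..<K}. (g i v :: complex))"
proof (induction m)
  case 0
  then show ?case by (simp add: Gset_0)
next
  case (Suc m)
  have "(\<Sum>y\<in>Gset K (Suc m). \<Prod>i<Suc m. g i (y i))
      = (\<Sum>p\<in>Gset K m \<times> {0..<K}. \<Prod>i<Suc m. g i (((\<lambda>(y, v). y(m := v)) p) i))"
    unfolding Gset_Suc by (subst sum.reindex[OF inj_upd]) (simp add: o_def)
  also have "\<dots> = (\<Sum>y\<in>Gset K m. \<Sum>v\<in>{0..<K}. (\<Prod>i<m. g i (y i)) * g m v)"
    unfolding sum_times_split by (simp add: prod.lessThan_Suc)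
  also have "\<dots> = (\<Sum>y\<in>Gset K m. \<Prod>i<m. g i (y i)) * (\<Sum>v\<in>{0..<K}. g m v)"
    by (simp add: sum_product)
  also have "\<dots> = (\<Prod>i<Suc m. \<Sum>v\<in>{0..<K}. g i v)"
    using Suc by simp
  finally show ?case .
qed


lemma powi_mod:
  fixes w :: complex
  assumes "w ^ M = 1"
  shows "w powi e = w powi (e mod int M)"
proof (cases "M = 0")
  case True then show ?thesis by simp
next
  case False
  have w0: "w \<noteq> 0" using assms False by (cases "w = 0") (auto simp: power_0_left)
  have "w powi (e mod int M + int M * (e div int M)) = w powi (e mod int M) * (w powi int M) powi (e div int M)"
    using w0 by (subst power_int_add) (auto simp: power_int_mult)
  also have "\<dots> = w powi (e mod int M)" using assms by simp
  finally show ?thesis by simp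
qed

lemma powi_cong_mod:
  fixes w :: complex
  assumes "w ^ M = 1" "e mod int M = e' mod int M"
  shows "w powi e = w powi e'"
  using powi_mod[OF assms(1), of e] powi_mod[OF assms(1), of e'] assms(2) by simp

lemma root_sum:
  fixes w :: complex and M :: nat
  assumes M: "M > 0" and w1: "w ^ M = 1" and prim: "\<forall>k. 0 < k \<and> k < M \<longrightarrow> w ^ k \<noteq> 1"
  shows "(\<Sum>v\<in>{0..<int M}. w powi (t * v)) = (if int M dvd t then of_nat M else 0)"
proof -
  have w0: "w \<noteq> 0" using w1 M by (cases "w = 0") (auto simp: power_0_left)
  define z where "z = w powi t"
  have "(\<Sum>v\<in>{0..<int M}. w powi (t * v)) = (\<Sum>k\<in>{0..<M}. w powi (t * int k))"
  proof -
    have "{0..<int M} = int ` {0..<M}" by (simp add: image_int_atLeastLessThan)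
    then show ?thesis by (simp add: sum.reindex)
  qed
  also have "\<dots> = (\<Sum>k<M. z ^ k)"
    unfolding z_def by (simp add: power_int_mult atLeast0LessThan power_int_of_nat[symmetric] del: power_int_of_nat)
  finally have S: "(\<Sum>v\<in>{0..<int M}. w powi (t * v)) = (\<Sum>k<M. z ^ k)" .
  have zM: "z ^ M = 1"
  proof -
    have "z ^ M = w powi (t * int M)" unfolding z_def by (simp add: power_int_mult power_int_of_nat[symmetric] del: power_int_of_nat)
    also have "\<dots> = (w ^ M) powi t" by (simp add: power_int_power mult.commute)
    finally show ?thesis using w1 by simp
  qed
  have z1: "z = 1 \<longleftrightarrow> int M dvd t"
  proof -
    have "z = w powi (t mod int M)" unfolding z_def using powi_mod[OF w1] by blast
    also have "\<dots> = w ^ nat (t mod int M)"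
      using M by (simp add: power_int_of_nat[symmetric] del: power_int_of_nat)
    finally have zz: "z = w ^ nat (t mod int M)" .
    show ?thesis
    proof
      assume "z = 1"
      then have "w ^ nat (t mod int M) = 1" using zz by simp
      moreover have "nat (t mod int M) < M" using M by (simp add: nat_less_iff)
      ultimately have "nat (t mod int M) = 0" using prim by (cases "nat (t mod int M) = 0") auto
      moreover have "t mod int M \<ge> 0" using M by simp
      ultimately have "t mod int M = 0" by linarith
      then show "int M dvd t" by (simp add: dvd_eq_mod_eq_0)
    next
      assume "int M dvd t"
      then show "z = 1" using zz by simp
    qed
  qed
  show ?thesis
  proof (cases "int M dvd t")
    case True
    then show ?thesis using S z1 by simp
  next
    case False
    then have "z \<noteq> 1" using z1 by simp
    then have "(\<Sum>k<M. z ^ k) = 0" using zM by (simp add: sum_gp_strict)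
    then show ?thesis using S False by simp
  qed
qed

lemma prod_if_const:
  "(\<Prod>i<m. if P i then (c::complex) else 0) = (if \<forall>i<m. P i then c ^ m else 0)"
  by (induction m) (auto simp: less_Suc_eq)

lemma orth_Gset:
  fixes w :: complex and M :: nat
  assumes M: "M > 0" and w1: "w ^ M = 1" and prim: "\<forall>k. 0 < k \<and> k < M \<longrightarrow> w ^ k \<noteq> 1"
  shows "(\<Sum>y\<in>Gset (int M) m. w powi (\<Sum>i<m. t i * y i))
       = (if \<forall>i<m. int M dvd t i then of_nat M ^ m else 0)"
proof -
  have w0: "w \<noteq> 0" using w1 M by (cases "w = 0") (auto simp: power_0_left)
  have "(\<Sum>y\<in>Gset (int M) m. w powi (\<Sum>i<m. t i * y i))
      = (\<Sum>y\<in>Gset (int M) m. \<Prod>i<m. w powi (t i * y i))"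
    using w0 by (simp add: powi_sum)
  also have "\<dots> = (\<Prod>i<m. \<Sum>v\<in>{0..<int M}. w powi (t i * v))"
    by (rule sum_Gset_prod)
  also have "\<dots> = (\<Prod>i<m. if int M dvd t i then of_nat M else 0)"
    using root_sum[OF assms] by simp
  finally show ?thesis by (simp add: prod_if_const)
qed

locale fourier =
  fixes P :: "'p set" and sub :: "'p \<Rightarrow> 'p \<Rightarrow> 'p" and dot :: "'p \<Rightarrow> 'p \<Rightarrow> int"
    and z0 :: 'p and q :: complex and K :: complex
  assumes finP: "finite P"
    and K0: "K \<noteq> 0"
    and sub_in: "x \<in> P \<Longrightarrow> y \<in> P \<Longrightarrow> sub x y \<in> P"
    and sub_chi: "b \<in> P \<Longrightarrow> x \<in> P \<Longrightarrow> y \<in> P \<Longrightarrow>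
        q powi (- dot b (sub x y)) = q powi (- dot b x) * q powi (dot b y)"
    and orth: "b \<in> P \<Longrightarrow> b' \<in> P \<Longrightarrow>
        (\<Sum>y\<in>P. q powi (dot b y) * q powi (- dot b' y)) = (if b = b' then K else 0)"
    and orth2: "x \<in> P \<Longrightarrow> (\<Sum>b\<in>P. q powi (- dot b x)) = (if x = z0 then K else 0)"
    and z0_in: "z0 \<in> P"
    and sub_z0: "x \<in> P \<Longrightarrow> y \<in> P \<Longrightarrow> sub x y = z0 \<longleftrightarrow> x = y"
    and dot_z0: "b \<in> P \<Longrightarrow> q powi (dot b z0) = 1"
begin

definition E :: "('p \<Rightarrow> complex) \<Rightarrow> 'p \<Rightarrow> complex" where
  "E h x = (if x \<in> P then (\<Sum>b\<in>P. h b * q powi (- dot b x)) / K else 0)"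

definition tr :: "('p \<Rightarrow> complex) \<Rightarrow> 'p \<Rightarrow> complex" where
  "tr X b = (\<Sum>y\<in>P. X y * q powi (dot b y))"

lemma E_out: "x \<notin> P \<Longrightarrow> E h x = 0"
  by (simp add: E_def)

lemma E_cong: "(\<And>b. b \<in> P \<Longrightarrow> h b = h' b) \<Longrightarrow> E h = E h'"
  unfolding E_def by (intro ext) (auto intro!: sum.cong)

lemma conv_out: "x \<notin> P \<Longrightarrow> conv P sub X Y x = 0"
  by (simp add: conv_def)

lemma conv_E: "conv P sub X (E g) = E (\<lambda>b. tr X b * g b)"
proof (rule ext)
  fix x
  show "conv P sub X (E g) x = E (\<lambda>b. tr X b * g b) x"
  proof (cases "x \<in> P")
    case False then show ?thesis by (simp add: conv_out E_out)
  next
    case True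
    have "conv P sub X (E g) x = (\<Sum>y\<in>P. X y * E g (sub x y))"
      using True by (simp add: conv_def)
    also have "\<dots> = (\<Sum>y\<in>P. \<Sum>b\<in>P. X y * g b * (q powi (- dot b x) * q powi (dot b y)) / K)"
      using True sub_in sub_chi
      by (auto simp: E_def sum_distrib_left sum_divide_distrib mult_ac intro!: sum.cong)
    also have "\<dots> = (\<Sum>b\<in>P. \<Sum>y\<in>P. X y * g b * (q powi (- dot b x) * q powi (dot b y)) / K)"
      by (rule sum.swap)
    also have "\<dots> = (\<Sum>b\<in>P. tr X b * g b * q powi (- dot b x) / K)"
    proof (rule sum.cong[OF refl])
      fix b
      have "(\<Sum>y\<in>P. X y * g b * (q powi (- dot b x) * q powi (dot b y)) / K)
          = (\<Sum>y\<in>P. (X y * q powi (dot b y)) * (g b * q powi (- dot b x) / K))"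
        by (rule sum.cong[OF refl]) (simp add: field_simps)
      also have "\<dots> = tr X b * (g b * q powi (- dot b x) / K)"
        unfolding tr_def by (rule sum_distrib_right[symmetric])
      finally show "(\<Sum>y\<in>P. X y * g b * (q powi (- dot b x) * q powi (dot b y)) / K)
          = tr X b * g b * q powi (- dot b x) / K" by (simp add: field_simps)
    qed
    also have "\<dots> = E (\<lambda>b. tr X b * g b) x"
      using True by (simp add: E_def sum_divide_distrib)
    finally show ?thesis .
  qed
qed

lemma tr_E: "b \<in> P \<Longrightarrow> tr (E h) b = h b"
proof -
  assume b: "b \<in> P"
  have "tr (E h) b = (\<Sum>y\<in>P. \<Sum>b'\<in>P. h b' * (q powi (dot b y) * q powi (- dot b' y)) / K)"
    unfolding tr_def
  proof (rule sum.cong[OF refl])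
    fix y assume y: "y \<in> P"
    have "E h y * q powi dot b y = (\<Sum>b'\<in>P. h b' * q powi (- dot b' y)) * (q powi dot b y / K)"
      using y by (simp add: E_def field_simps)
    also have "\<dots> = (\<Sum>b'\<in>P. h b' * q powi (- dot b' y) * (q powi dot b y / K))"
      by (rule sum_distrib_right)
    also have "\<dots> = (\<Sum>b'\<in>P. h b' * (q powi (dot b y) * q powi (- dot b' y)) / K)"
      by (rule sum.cong[OF refl]) (simp add: field_simps)
    finally show "E h y * q powi dot b y = (\<Sum>b'\<in>P. h b' * (q powi (dot b y) * q powi (- dot b' y)) / K)" .
  qed
  also have "\<dots> = (\<Sum>b'\<in>P. \<Sum>y\<in>P. h b' * (q powi (dot b y) * q powi (- dot b' y)) / K)"
    by (rule sum.swap)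
  also have "\<dots> = (\<Sum>b'\<in>P. h b' * (\<Sum>y\<in>P. q powi (dot b y) * q powi (- dot b' y)) / K)"
    by (simp add: sum_distrib_left sum_divide_distrib)
  also have "\<dots> = (\<Sum>b'\<in>P. if b' = b then h b else 0)"
    using b orth K0 by (intro sum.cong) auto
  also have "\<dots> = h b" using b finP by simp
  finally show ?thesis .
qed

lemma E_one: "E (\<lambda>_. 1) = gelem z0"
proof (rule ext)
  fix x show "E (\<lambda>_. 1) x = gelem z0 x"
    using orth2[of x] z0_in K0 by (auto simp: E_def gelem_def)
qed

lemma conv_unit:
  assumes "\<forall>x. x \<notin> P \<longrightarrow> X x = 0"
  shows "conv P sub X (gelem z0) = X"
proof (rule ext)
  fix x show "conv P sub X (gelem z0) x = X x"
  proof (cases "x \<in> P")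
    case False then show ?thesis using assms by (simp add: conv_def)
  next
    case True
    have "conv P sub X (gelem z0) x = (\<Sum>y\<in>P. if y = x then X y else 0)"
      using True sub_z0 by (auto simp: conv_def gelem_def intro!: sum.cong)
    also have "\<dots> = X x" using True finP by simp
    finally show ?thesis .
  qed
qed

lemma inversion:
  assumes "\<forall>x. x \<notin> P \<longrightarrow> X x = 0"
  shows "X = E (tr X)"
proof -
  have "X = conv P sub X (E (\<lambda>_. 1))" using conv_unit[OF assms] by (simp add: E_one)
  also have "\<dots> = E (tr X)" by (simp add: conv_E)
  finally show ?thesis .
qed

lemma conv_tr:
  assumes "\<forall>x. x \<notin> P \<longrightarrow> Y x = 0"
  shows "conv P sub X Y = E (\<lambda>b. tr X b * tr Y b)"
  using conv_E[of X "tr Y"] inversion[OF assms] by simp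

lemma tr_gelem: "b \<in> P \<Longrightarrow> tr (gelem z0) b = 1"
proof -
  assume b: "b \<in> P"
  have "tr (gelem z0) b = (\<Sum>y\<in>P. if y = z0 then q powi (dot b y) else 0)"
    unfolding tr_def gelem_def by (rule sum.cong) auto
  also have "\<dots> = 1" using finP z0_in dot_z0[OF b] by simp
  finally show ?thesis .
qed

lemma the_inv:
  assumes h0: "\<And>b. b \<in> P \<Longrightarrow> h b \<noteq> 0"
  shows "(THE Y. (\<forall>x. x \<notin> P \<longrightarrow> Y x = 0) \<and> conv P sub (E h) Y = gelem z0
             \<and> conv P sub Y (E h) = gelem z0) = E (\<lambda>b. 1 / h b)"
proof (rule the_equality)
  have c1: "conv P sub (E h) (E (\<lambda>b. 1 / h b)) = gelem z0"
    unfolding conv_E E_one[symmetric] using h0 by (intro E_cong) (simp add: tr_E)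
  have c2: "conv P sub (E (\<lambda>b. 1 / h b)) (E h) = gelem z0"
    unfolding conv_E E_one[symmetric] using h0 by (intro E_cong) (simp add: tr_E)
  show "(\<forall>x. x \<notin> P \<longrightarrow> E (\<lambda>b. 1 / h b) x = 0) \<and> conv P sub (E h) (E (\<lambda>b. 1 / h b)) = gelem z0
             \<and> conv P sub (E (\<lambda>b. 1 / h b)) (E h) = gelem z0"
    using c1 c2 by (simp add: E_out)
next
  fix Y assume Y: "(\<forall>x. x \<notin> P \<longrightarrow> Y x = 0) \<and> conv P sub (E h) Y = gelem z0
             \<and> conv P sub Y (E h) = gelem z0"
  then have e: "E (\<lambda>b. tr Y b * h b) = gelem z0" by (simp add: conv_E)
  have t: "tr Y b = 1 / h b" if b: "b \<in> P" for b
  proof -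
    have "tr Y b * h b = 1"
      using tr_E[OF b, of "\<lambda>b. tr Y b * h b"] tr_gelem[OF b] e by simp
    then show ?thesis using h0[OF b] by (simp add: field_simps)
  qed
  have "Y = E (tr Y)" using Y inversion by blast
  also have "\<dots> = E (\<lambda>b. 1 / h b)" using t by (intro E_cong) simp
  finally show "Y = E (\<lambda>b. 1 / h b)" .
qed

end

lemma powi_cong_dvd:
  fixes w :: complex
  assumes "w ^ M = 1" "int M dvd (e - e')"
  shows "w powi e = w powi e'"
  using powi_cong_mod[OF assms(1)] assms(2) by (simp add: mod_eq_dvd_iff)

lemma mod_eq_in_range:
  fixes x y N :: int
  assumes "0 \<le> x" "x < N" "0 \<le> y" "y < N" "N dvd x - y"
  shows "x = y"
proof -
  have "x mod N = y mod N" using assms(5) by (simp add: mod_eq_dvd_iff)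
  then show ?thesis using assms by simp
qed

locale sett =
  fixes q :: complex and n m :: nat
  assumes n2: "n \<ge> 2" and qN: "q ^ (n^2) = 1" and prim: "\<forall>k. 0 < k \<and> k < n^2 \<longrightarrow> q ^ k \<noteq> 1"
begin

lemma q0: "q \<noteq> 0"
  using qN n2 by (cases "q = 0") (auto simp: power_0_left)

lemma powi_add': "q powi (a + b) = q powi a * q powi b"
  using q0 by (simp add: power_int_add)

lemma powi_diff': "q powi (a - b) = q powi a * q powi (- b)"
  using powi_add'[of a "- b"] by simp

lemma zerov_in: "zerov \<in> Gset (int n ^ 2) m"
  using n2 by (simp add: Gset_def zerov_def)

lemma powi_N: "int n ^ 2 dvd (e - e') \<Longrightarrow> q powi e = q powi e'"
  using powi_cong_dvd[OF qN, of e e'] by simp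

lemma orthG:
  "(\<Sum>y\<in>Gset (int n ^ 2) m. q powi (\<Sum>i<m. t i * y i))
       = (if \<forall>i<m. int n ^ 2 dvd t i then of_nat n ^ (2 * m) else 0)"
proof -
  have "n^2 > 0" using n2 by simp
  from orth_Gset[OF this qN prim, where m=m and t=t] show ?thesis
    by (auto simp: power_mult)
qed

lemma G_eq:
  assumes "b \<in> Gset (int n ^ 2) m" "b' \<in> Gset (int n ^ 2) m"
  shows "(\<forall>i<m. int n ^ 2 dvd (b i - b' i)) \<longleftrightarrow> b = b'"
proof
  assume h: "\<forall>i<m. int n ^ 2 dvd (b i - b' i)"
  show "b = b'"
  proof
    fix i show "b i = b' i"
    proof (cases "i < m")
      case True then show ?thesis
        using assms h mod_eq_in_range[of "b i" "int n ^ 2" "b' i"] unfolding Gset_def by auto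
    next
      case False then show ?thesis using assms unfolding Gset_def by auto
    qed
  qed
qed simp

lemma O1:
  assumes "b \<in> Gset (int n ^ 2) m" "b' \<in> Gset (int n ^ 2) m"
  shows "(\<Sum>y\<in>Gset (int n ^ 2) m. q powi (dotp m b y) * q powi (- dotp m b' y))
       = (if b = b' then of_nat n ^ (2 * m) else 0)"
proof -
  have "(\<Sum>y\<in>Gset (int n ^ 2) m. q powi (dotp m b y) * q powi (- dotp m b' y))
      = (\<Sum>y\<in>Gset (int n ^ 2) m. q powi (\<Sum>i<m. (b i - b' i) * y i))"
    by (rule sum.cong[OF refl]) (simp add: powi_add'[symmetric] dotp_def algebra_simps sum_subtractf)
  also have "\<dots> = (if b = b' then of_nat n ^ (2 * m) else 0)"
    using orthG G_eq[OF assms] by simp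
  finally show ?thesis .
qed

lemma G_zero:
  assumes "x \<in> Gset (int n ^ 2) m"
  shows "(\<forall>i<m. int n ^ 2 dvd (- x i)) \<longleftrightarrow> x = zerov"
  using G_eq[OF assms zerov_in] by (simp add: zerov_def)

lemma O2:
  assumes "x \<in> Gset (int n ^ 2) m"
  shows "(\<Sum>b\<in>Gset (int n ^ 2) m. q powi (- dotp m b x))
       = (if x = zerov then of_nat n ^ (2 * m) else 0)"
proof -
  have "(\<Sum>b\<in>Gset (int n ^ 2) m. q powi (- dotp m b x))
      = (\<Sum>b\<in>Gset (int n ^ 2) m. q powi (\<Sum>i<m. (- x i) * b i))"
    by (rule sum.cong[OF refl]) (simp add: dotp_def sum_negf mult.commute)
  also have "\<dots> = (if \<forall>i<m. int n ^ 2 dvd (- x i) then of_nat n ^ (2 * m) else 0)"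
    by (rule orthG)
  also have "\<dots> = (if x = zerov then of_nat n ^ (2 * m) else 0)"
    using G_zero[OF assms] by simp
  finally show ?thesis .
qed

lemma vsub_in:
  "x \<in> Gset (int n ^ 2) m \<Longrightarrow> y \<in> Gset (int n ^ 2) m \<Longrightarrow> vsub (int n ^ 2) x y \<in> Gset (int n ^ 2) m"
  using n2 unfolding Gset_def vsub_def by auto

lemma vsub_chi:
  "q powi (- dotp m b (vsub (int n ^ 2) x y)) = q powi (- dotp m b x) * q powi (dotp m b y)"
proof -
  have "q powi (- dotp m b (vsub (int n ^ 2) x y)) = q powi (- dotp m b x + dotp m b y)"
  proof (rule powi_N)
    have "- dotp m b (vsub (int n ^ 2) x y) - (- dotp m b x + dotp m b y)
        = (\<Sum>i<m. b i * ((x i - y i) - (x i - y i) mod int n ^ 2))"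
    proof -
      have "(\<Sum>i<m. b i * ((x i - y i) - (x i - y i) mod int n ^ 2))
          = (\<Sum>i<m. b i * x i) - (\<Sum>i<m. b i * y i) - (\<Sum>i<m. b i * ((x i - y i) mod int n ^ 2))"
        by (simp add: sum_subtractf right_diff_distrib)
      then show ?thesis unfolding dotp_def vsub_def by linarith
    qed
    also have "int n ^ 2 dvd \<dots>"
      by (intro dvd_sum dvd_mult) (simp add: mod_eq_dvd_iff[symmetric] )
    finally show "int n ^ 2 dvd - dotp m b (vsub (int n ^ 2) x y) - (- dotp m b x + dotp m b y)" .
  qed
  then show ?thesis using powi_add'[of "- dotp m b x" "dotp m b y"] by simp
qed

lemma vsub_zero:
  assumes "x \<in> Gset (int n ^ 2) m" "y \<in> Gset (int n ^ 2) m"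
  shows "vsub (int n ^ 2) x y = zerov \<longleftrightarrow> x = y"
proof
  assume h: "vsub (int n ^ 2) x y = zerov"
  have "\<forall>i<m. int n ^ 2 dvd (x i - y i)"
  proof (intro allI impI)
    fix i have "(x i - y i) mod int n ^ 2 = 0" using fun_cong[OF h, of i] by (simp add: vsub_def zerov_def)
    then show "int n ^ 2 dvd (x i - y i)" by (simp add: dvd_eq_mod_eq_0)
  qed
  then show "x = y" using G_eq[OF assms] by simp
qed (simp add: vsub_def zerov_def)

lemma dotp_zero: "dotp m b zerov = 0"
  by (simp add: dotp_def zerov_def)

lemma D0: "(of_nat n ^ (2 * m) :: complex) \<noteq> 0"
  using n2 by simp

end

sublocale sett \<subseteq> f2: fourier "Gset (int n ^ 2) m \<times> Gset (int n ^ 2) m"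
  "\<lambda>(x1, x2) (y1, y2). (vsub (int n ^ 2) x1 y1, vsub (int n ^ 2) x2 y2)"
  "\<lambda>(b1, b2) (x1, x2). dotp m b1 x1 + dotp m b2 x2" "(zerov, zerov)" q
  "of_nat n ^ (2 * m) * of_nat n ^ (2 * m)"
proof (unfold_locales, unfold split_paired_all)
  show "finite (Gset (int n ^ 2) m \<times> Gset (int n ^ 2) m)" by (simp add: finite_Gset)
  show "of_nat n ^ (2 * m) * of_nat n ^ (2 * m) \<noteq> (0::complex)" using D0 by simp
  show "(zerov, zerov) \<in> Gset (int n ^ 2) m \<times> Gset (int n ^ 2) m" using zerov_in by simp
next
  fix x1 x2 y1 y2
  assume "(x1, x2) \<in> Gset (int n ^ 2) m \<times> Gset (int n ^ 2) m" "(y1, y2) \<in> Gset (int n ^ 2) m \<times> Gset (int n ^ 2) m"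
  then show "(case (x1, x2) of (x1, x2) \<Rightarrow> \<lambda>(y1, y2). (vsub (int n ^ 2) x1 y1, vsub (int n ^ 2) x2 y2)) (y1, y2)
       \<in> Gset (int n ^ 2) m \<times> Gset (int n ^ 2) m"
    by (simp add: vsub_in)
  show "((case (x1, x2) of (x1, x2) \<Rightarrow> \<lambda>(y1, y2). (vsub (int n ^ 2) x1 y1, vsub (int n ^ 2) x2 y2)) (y1, y2) = (zerov, zerov))
     = ((x1, x2) = (y1, y2))" using vsub_zero \<open>(x1, x2) \<in> _\<close> \<open>(y1, y2) \<in> _\<close> by auto
next
  fix b1 b2 x1 x2 y1 y2
  show "q powi - (case (b1, b2) of (b1, b2) \<Rightarrow> \<lambda>(x1, x2). dotp m b1 x1 + dotp m b2 x2)
          ((case (x1, x2) of (x1, x2) \<Rightarrow> \<lambda>(y1, y2). (vsub (int n ^ 2) x1 y1, vsub (int n ^ 2) x2 y2)) (y1, y2)) =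
       q powi - (case (b1, b2) of (b1, b2) \<Rightarrow> \<lambda>(x1, x2). dotp m b1 x1 + dotp m b2 x2) (x1, x2) *
       q powi (case (b1, b2) of (b1, b2) \<Rightarrow> \<lambda>(x1, x2). dotp m b1 x1 + dotp m b2 x2) (y1, y2)"
    using vsub_chi[of b1 x1 y1] vsub_chi[of b2 x2 y2]
    by (simp add: powi_add' powi_diff')
next
  fix b1 b2
  show "q powi (case (b1, b2) of (b1, b2) \<Rightarrow> \<lambda>(x1, x2). dotp m b1 x1 + dotp m b2 x2) (zerov, zerov) = 1"
    by (simp add: dotp_zero)
next
  fix b1 b2 b1' b2'
  assume b: "(b1, b2) \<in> Gset (int n ^ 2) m \<times> Gset (int n ^ 2) m" and b': "(b1', b2') \<in> Gset (int n ^ 2) m \<times> Gset (int n ^ 2) m"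
  have "(\<Sum>y\<in>Gset (int n ^ 2) m \<times> Gset (int n ^ 2) m.
          q powi (case (b1, b2) of (b1, b2) \<Rightarrow> \<lambda>(x1, x2). dotp m b1 x1 + dotp m b2 x2) y *
          q powi - (case (b1', b2') of (b1, b2) \<Rightarrow> \<lambda>(x1, x2). dotp m b1 x1 + dotp m b2 x2) y)
     = (\<Sum>y1\<in>Gset (int n ^ 2) m. q powi (dotp m b1 y1) * q powi (- dotp m b1' y1)) *
       (\<Sum>y2\<in>Gset (int n ^ 2) m. q powi (dotp m b2 y2) * q powi (- dotp m b2' y2))"
    unfolding sum_times_split sum_product by (simp add: powi_add' powi_diff' mult_ac)
  also have "\<dots> = (if (b1, b2) = (b1', b2') then of_nat n ^ (2 * m) * of_nat n ^ (2 * m) else 0)"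
    using b b' by (simp add: O1)
  finally show "(\<Sum>y\<in>Gset (int n ^ 2) m \<times> Gset (int n ^ 2) m.
          q powi (case (b1, b2) of (b1, b2) \<Rightarrow> \<lambda>(x1, x2). dotp m b1 x1 + dotp m b2 x2) y *
          q powi - (case (b1', b2') of (b1, b2) \<Rightarrow> \<lambda>(x1, x2). dotp m b1 x1 + dotp m b2 x2) y)
     = (if (b1, b2) = (b1', b2') then of_nat n ^ (2 * m) * of_nat n ^ (2 * m) else 0)" .
next
  fix x1 x2
  assume x: "(x1, x2) \<in> Gset (int n ^ 2) m \<times> Gset (int n ^ 2) m"
  have "(\<Sum>b\<in>Gset (int n ^ 2) m \<times> Gset (int n ^ 2) m.
          q powi - (case b of (b1, b2) \<Rightarrow> \<lambda>(x1, x2). dotp m b1 x1 + dotp m b2 x2) (x1, x2))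
     = (\<Sum>b1\<in>Gset (int n ^ 2) m. q powi (- dotp m b1 x1)) * (\<Sum>b2\<in>Gset (int n ^ 2) m. q powi (- dotp m b2 x2))"
    unfolding sum_times_split sum_product by (simp add: powi_add' powi_diff')
  also have "\<dots> = (if (x1, x2) = (zerov, zerov) then of_nat n ^ (2 * m) * of_nat n ^ (2 * m) else 0)"
    using x by (simp add: O2)
  finally show "(\<Sum>b\<in>Gset (int n ^ 2) m \<times> Gset (int n ^ 2) m.
          q powi - (case b of (b1, b2) \<Rightarrow> \<lambda>(x1, x2). dotp m b1 x1 + dotp m b2 x2) (x1, x2))
     = (if (x1, x2) = (zerov, zerov) then of_nat n ^ (2 * m) * of_nat n ^ (2 * m) else 0)" .
qed

lemma sum3_prod:
  "(\<Sum>a\<in>X. \<Sum>b\<in>Y. \<Sum>c\<in>Z. f a * g b * h c) = (\<Sum>a\<in>X. f a) * (\<Sum>b\<in>Y. g b) * (\<Sum>c\<in>Z. (h c :: complex))"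
proof -
  have "(\<Sum>a\<in>X. f a) * (\<Sum>b\<in>Y. g b) * (\<Sum>c\<in>Z. h c) = (\<Sum>a\<in>X. f a * ((\<Sum>b\<in>Y. g b) * (\<Sum>c\<in>Z. h c)))"
    by (simp add: sum_distrib_right mult.assoc)
  also have "\<dots> = (\<Sum>a\<in>X. \<Sum>b\<in>Y. \<Sum>c\<in>Z. f a * g b * h c)"
    by (simp add: sum_distrib_left sum_distrib_right mult.assoc) (rule sum.cong[OF refl], rule sum.swap)
  finally show ?thesis by simp
qed

lemma sum_times3_split:
  "sum F (X \<times> Y \<times> Z) = (\<Sum>a\<in>X. \<Sum>b\<in>Y. \<Sum>c\<in>Z. F (a, b, c))"
  by (simp add: sum_times_split)

context sett begin

lemma orth3:
  assumes "b1 \<in> Gset (int n ^ 2) m" "b2 \<in> Gset (int n ^ 2) m" "b3 \<in> Gset (int n ^ 2) m"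
    "b1' \<in> Gset (int n ^ 2) m" "b2' \<in> Gset (int n ^ 2) m" "b3' \<in> Gset (int n ^ 2) m"
  shows "(\<Sum>a\<in>Gset (int n ^ 2) m. \<Sum>b\<in>Gset (int n ^ 2) m. \<Sum>c\<in>Gset (int n ^ 2) m.
     q powi (dotp m b1 a + dotp m b2 b + dotp m b3 c) * q powi (- (dotp m b1' a + dotp m b2' b + dotp m b3' c)))
   = (if (b1, b2, b3) = (b1', b2', b3') then of_nat n ^ (2 * m) * of_nat n ^ (2 * m) * of_nat n ^ (2 * m) else 0)"
proof -
  have e: "\<And>a b c. q powi (dotp m b1 a + dotp m b2 b + dotp m b3 c) * q powi (- (dotp m b1' a + dotp m b2' b + dotp m b3' c))
     = (q powi dotp m b1 a * q powi (- dotp m b1' a)) * (q powi dotp m b2 b * q powi (- dotp m b2' b))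
       * (q powi dotp m b3 c * q powi (- dotp m b3' c))"
    by (simp add: powi_add' powi_diff' mult_ac)
  show ?thesis unfolding e sum3_prod using assms by (simp add: O1)
qed

lemma orth3b:
  assumes "x1 \<in> Gset (int n ^ 2) m" "x2 \<in> Gset (int n ^ 2) m" "x3 \<in> Gset (int n ^ 2) m"
  shows "(\<Sum>a\<in>Gset (int n ^ 2) m. \<Sum>b\<in>Gset (int n ^ 2) m. \<Sum>c\<in>Gset (int n ^ 2) m.
     q powi (- (dotp m a x1 + dotp m b x2 + dotp m c x3)))
   = (if (x1, x2, x3) = (zerov, zerov, zerov) then of_nat n ^ (2 * m) * of_nat n ^ (2 * m) * of_nat n ^ (2 * m) else 0)"
proof -
  have e: "\<And>a b c. q powi (- (dotp m a x1 + dotp m b x2 + dotp m c x3))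
     = q powi (- dotp m a x1) * q powi (- dotp m b x2) * q powi (- dotp m c x3)"
    by (simp add: powi_add' powi_diff' mult_ac)
  show ?thesis unfolding e sum3_prod using assms by (simp add: O2)
qed

end

sublocale sett \<subseteq> f3: fourier "Gset (int n ^ 2) m \<times> Gset (int n ^ 2) m \<times> Gset (int n ^ 2) m"
  "\<lambda>(x1, x2, x3) (y1, y2, y3). (vsub (int n ^ 2) x1 y1, vsub (int n ^ 2) x2 y2, vsub (int n ^ 2) x3 y3)"
  "\<lambda>(b1, b2, b3) (x1, x2, x3). dotp m b1 x1 + dotp m b2 x2 + dotp m b3 x3" "(zerov, zerov, zerov)" q
  "of_nat n ^ (2 * m) * of_nat n ^ (2 * m) * of_nat n ^ (2 * m)"
  apply (unfold_locales, unfold split_paired_all)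
  subgoal by (simp add: finite_Gset)
  subgoal using D0 by simp
  subgoal by (simp add: vsub_in)
  subgoal for b1 b2 b3 x1 x2 x3 y1 y2 y3
    using vsub_chi[of b1 x1 y1] vsub_chi[of b2 x2 y2] vsub_chi[of b3 x3 y3]
    by (simp add: powi_add' powi_diff')
  subgoal for b1 b2 b3 b1' b2' b3'
    unfolding sum_times3_split using orth3[of b1 b2 b3 b1' b2' b3'] by simp
  subgoal for x1 x2 x3
    unfolding sum_times3_split using orth3b[of x1 x2 x3] by simp
  subgoal using zerov_in by simp
  subgoal using vsub_zero by auto
  subgoal by (simp add: dotp_zero)
  done

lemma int_key:
  fixes n B E C Dd a :: int
  assumes n: "n > 0"
  shows "n^2 dvd (- E * (Dd - Dd mod n) * a + - B * ((C + Dd) mod n^2 - (C + Dd) mod n^2 mod n) * a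
      - - ((B + E) mod n^2) * (Dd - Dd mod n) * a - - B * (C - C mod n) * a
      - a * (B mod n) * ((C mod n + Dd mod n) mod n - C mod n - Dd mod n))"
proof -
  define N where "N = n^2"
  define D1 D0 C1 C0 B1 B0 where "D1 = Dd div n" "D0 = Dd mod n" "C1 = C div n" "C0 = C mod n"
    "B1 = B div n" "B0 = B mod n"
  define s k r t u v where "s = (C + Dd) mod N" "k = (C + Dd) div N" "r = (B + E) mod N" "t = (B + E) div N"
    "u = (C0 + D0) div n" "v = (C0 + D0) mod n"
  have hD: "Dd = n * D1 + D0" unfolding D1_D0_C1_C0_B1_B0_def by simp
  have hC: "C = n * C1 + C0" unfolding D1_D0_C1_C0_B1_B0_def by simp
  have hB: "B = n * B1 + B0" unfolding D1_D0_C1_C0_B1_B0_def by simp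
  have hs: "s = C + Dd - N * k" unfolding s_k_r_t_u_v_def by (simp add: minus_div_mult_eq_mod[symmetric] mult.commute)
  have hr: "r = B + E - N * t" unfolding s_k_r_t_u_v_def by (simp add: minus_div_mult_eq_mod[symmetric] mult.commute)
  have hv: "v = C0 + D0 - n * u" unfolding s_k_r_t_u_v_def by (simp add: minus_div_mult_eq_mod[symmetric] mult.commute)
  have smod: "s mod n = v"
  proof -
    have "n dvd N" unfolding N_def by (simp add: power2_eq_square)
    then have "s mod n = (C + Dd) mod n" unfolding s_k_r_t_u_v_def by (simp add: mod_mod_cancel)
    also have "\<dots> = v" unfolding s_k_r_t_u_v_def D1_D0_C1_C0_B1_B0_def by (simp add: mod_add_eq)
    finally show ?thesis .
  qed
  have "- E * (Dd - Dd mod n) * a + - B * (s - s mod n) * a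
      - - r * (Dd - Dd mod n) * a - - B * (C - C mod n) * a
      - a * (B mod n) * ((C mod n + Dd mod n) mod n - C mod n - Dd mod n)
      = - E * (Dd - D0) * a + - B * (s - v) * a
      - - r * (Dd - D0) * a - - B * (C - C0) * a
      - a * B0 * (v - C0 - D0)"
    unfolding smod by (simp add: D1_D0_C1_C0_B1_B0_def s_k_r_t_u_v_def)
  also have "\<dots> = N * (a * (B * k - t * n * D1 - B1 * u))"
    unfolding hs hr hv N_def using hD hC hB by (simp add: algebra_simps power2_eq_square)
  finally show ?thesis unfolding N_def s_k_r_t_u_v_def by simp
qed

context fourier begin

lemma conv4:
  assumes B: "\<forall>x. x \<notin> P \<longrightarrow> B x = 0" and C: "\<forall>x. x \<notin> P \<longrightarrow> C x = 0"
    and D: "\<forall>x. x \<notin> P \<longrightarrow> D x = 0"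
  shows "conv P sub (conv P sub (conv P sub A B) C) D = E (\<lambda>p. tr A p * tr B p * tr C p * tr D p)"
proof -
  have 1: "conv P sub A B = E (\<lambda>p. tr A p * tr B p)" by (rule conv_tr[OF B])
  have 2: "conv P sub (E h) Y = E (\<lambda>p. h p * tr Y p)" if Y: "\<forall>x. x \<notin> P \<longrightarrow> Y x = 0" for h Y
  proof -
    have "conv P sub (E h) Y = E (\<lambda>b. tr (E h) b * tr Y b)" by (rule conv_tr[OF Y])
    also have "\<dots> = E (\<lambda>p. h p * tr Y p)" by (rule E_cong) (simp add: tr_E)
    finally show ?thesis .
  qed
  show ?thesis unfolding 1 2[OF C] 2[OF D] by simp
qed

end

lemma gelem_sum_left:
  "finite A \<Longrightarrow> (\<Sum>x\<in>A. gelem g x * F x) = (if g \<in> A then F g else 0)"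
proof -
  assume A: "finite A"
  have "(\<Sum>x\<in>A. gelem g x * F x) = (\<Sum>x\<in>A. if x = g then F x else 0)"
    by (rule sum.cong) (auto simp: gelem_def)
  then show ?thesis using A by simp
qed

context sett begin

definition coef :: "(nat \<Rightarrow> nat \<Rightarrow> int) \<Rightarrow> (nat \<Rightarrow> int) \<times> (nat \<Rightarrow> int) \<Rightarrow> complex" where
  "coef a p = (case p of (b, c) \<Rightarrow> \<Prod>i<m. \<Prod>j<m. cfun q n (b i) (c j) powi a i j)"

lemma bigidem_eval:
  "bigidem q n m b x = (if x \<in> Gset (int n ^ 2) m then q powi (- dotp m b x) / of_nat n ^ (2 * m) else 0)"
  unfolding bigidem_def by (rule gelem_sum[OF finite_Gset])

lemma Jtw_E: "Jtw q n m a = f2.E (coef a)"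
proof (rule ext, clarify)
  fix x y
  show "Jtw q n m a (x, y) = f2.E (coef a) (x, y)"
  proof (cases "x \<in> Gset (int n ^ 2) m \<and> y \<in> Gset (int n ^ 2) m")
    case True
    have "Jtw q n m a (x, y) = (\<Sum>b\<in>Gset (int n ^ 2) m. \<Sum>c\<in>Gset (int n ^ 2) m.
        coef a (b, c) * q powi (- (dotp m b x + dotp m c y)) / (of_nat n ^ (2 * m) * of_nat n ^ (2 * m)))"
      unfolding Jtw_def using True
      by (auto simp: bigidem_eval coef_def powi_add' powi_diff' intro!: sum.cong)
    also have "\<dots> = f2.E (coef a) (x, y)"
      unfolding f2.E_def using True by (simp add: sum_times_split sum_divide_distrib)
    finally show ?thesis .
  next
    case False
    then show ?thesis unfolding Jtw_def by (auto simp: bigidem_eval f2.E_out)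
  qed
qed

lemma coef_nz: "coef a p \<noteq> 0"
  using q0 by (cases p) (simp add: coef_def cfun_def)

lemma inv_E: "inv2 (int n ^ 2) m (f2.E (coef a)) = f2.E (\<lambda>p. 1 / coef a p)"
  unfolding inv2_def mult2_def by (rule f2.the_inv) (simp add: coef_nz)

lemma supp_one_tensor:
  "\<forall>p. p \<notin> Gset (int n ^ 2) m \<times> Gset (int n ^ 2) m \<longrightarrow> Y p = 0 \<Longrightarrow>
   \<forall>p. p \<notin> Gset (int n ^ 2) m \<times> Gset (int n ^ 2) m \<times> Gset (int n ^ 2) m \<longrightarrow> one_tensor Y p = 0"
  using zerov_in by (auto simp: one_tensor_def gelem_def)

lemma supp_tensor_one:
  "\<forall>p. p \<notin> Gset (int n ^ 2) m \<times> Gset (int n ^ 2) m \<longrightarrow> Y p = 0 \<Longrightarrow>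
   \<forall>p. p \<notin> Gset (int n ^ 2) m \<times> Gset (int n ^ 2) m \<times> Gset (int n ^ 2) m \<longrightarrow> tensor_one Y p = 0"
  using zerov_in by (auto simp: tensor_one_def gelem_def)

lemma supp_id_Delta:
  "\<forall>p. p \<notin> Gset (int n ^ 2) m \<times> Gset (int n ^ 2) m \<longrightarrow> Y p = 0 \<Longrightarrow>
   \<forall>p. p \<notin> Gset (int n ^ 2) m \<times> Gset (int n ^ 2) m \<times> Gset (int n ^ 2) m \<longrightarrow> id_Delta Y p = 0"
  by (auto simp: id_Delta_def)

lemma supp_Delta_id:
  "\<forall>p. p \<notin> Gset (int n ^ 2) m \<times> Gset (int n ^ 2) m \<longrightarrow> Y p = 0 \<Longrightarrow>
   \<forall>p. p \<notin> Gset (int n ^ 2) m \<times> Gset (int n ^ 2) m \<times> Gset (int n ^ 2) m \<longrightarrow> Delta_id Y p = 0"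
  by (auto simp: Delta_id_def)

lemma dotp_add: "dotp m (\<lambda>i. c i + d i) y = dotp m c y + dotp m d y"
  by (simp add: dotp_def distrib_right sum.distrib)

lemma tr_one_tensor: "f3.tr (one_tensor Y) (b, c, d) = f2.tr Y (c, d)"
proof -
  have "f3.tr (one_tensor Y) (b, c, d) = (\<Sum>x\<in>Gset (int n ^ 2) m. gelem zerov x *
      (\<Sum>y\<in>Gset (int n ^ 2) m. \<Sum>z\<in>Gset (int n ^ 2) m. Y (y, z) * q powi (dotp m b x + dotp m c y + dotp m d z)))"
    unfolding f3.tr_def sum_times3_split one_tensor_def by (simp add: sum_distrib_left mult_ac)
  also have "\<dots> = (\<Sum>y\<in>Gset (int n ^ 2) m. \<Sum>z\<in>Gset (int n ^ 2) m. Y (y, z) * q powi (dotp m c y + dotp m d z))"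
    by (simp add: gelem_sum_left finite_Gset zerov_in dotp_zero)
  also have "\<dots> = f2.tr Y (c, d)"
    unfolding f2.tr_def sum_times_split by simp
  finally show ?thesis .
qed

lemma tr_tensor_one: "f3.tr (tensor_one Y) (b, c, d) = f2.tr Y (b, c)"
proof -
  have "f3.tr (tensor_one Y) (b, c, d) = (\<Sum>x\<in>Gset (int n ^ 2) m. \<Sum>y\<in>Gset (int n ^ 2) m. \<Sum>z\<in>Gset (int n ^ 2) m.
      gelem zerov z * (Y (x, y) * q powi (dotp m b x + dotp m c y + dotp m d z)))"
    unfolding f3.tr_def sum_times3_split tensor_one_def by (simp add: mult_ac)
  also have "\<dots> = (\<Sum>x\<in>Gset (int n ^ 2) m. \<Sum>y\<in>Gset (int n ^ 2) m. Y (x, y) * q powi (dotp m b x + dotp m c y))"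
    by (simp add: gelem_sum_left finite_Gset zerov_in dotp_zero)
  also have "\<dots> = f2.tr Y (b, c)"
    unfolding f2.tr_def sum_times_split by simp
  finally show ?thesis .
qed

lemma tr_id_Delta: "f3.tr (id_Delta Y) (b, c, d) = f2.tr Y (b, \<lambda>i. c i + d i)"
proof -
  have "f3.tr (id_Delta Y) (b, c, d) = (\<Sum>x\<in>Gset (int n ^ 2) m. \<Sum>y\<in>Gset (int n ^ 2) m. \<Sum>z\<in>Gset (int n ^ 2) m.
      (if y = z then Y (x, y) * q powi (dotp m b x + dotp m c y + dotp m d z) else 0))"
    unfolding f3.tr_def sum_times3_split id_Delta_def by (auto intro!: sum.cong)
  also have "\<dots> = (\<Sum>x\<in>Gset (int n ^ 2) m. \<Sum>y\<in>Gset (int n ^ 2) m. Y (x, y) * q powi (dotp m b x + dotp m (\<lambda>i. c i + d i) y))"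
    by (simp add: finite_Gset dotp_add add.assoc)
  also have "\<dots> = f2.tr Y (b, \<lambda>i. c i + d i)"
    unfolding f2.tr_def sum_times_split by simp
  finally show ?thesis .
qed

lemma tr_Delta_id: "f3.tr (Delta_id Y) (b, c, d) = f2.tr Y (\<lambda>i. b i + c i, d)"
proof -
  have "f3.tr (Delta_id Y) (b, c, d) = (\<Sum>x\<in>Gset (int n ^ 2) m. \<Sum>y\<in>Gset (int n ^ 2) m. \<Sum>z\<in>Gset (int n ^ 2) m.
      (if x = y then Y (x, z) * q powi (dotp m b x + dotp m c y + dotp m d z) else 0))"
    unfolding f3.tr_def sum_times3_split Delta_id_def by (auto intro!: sum.cong)
  also have "\<dots> = (\<Sum>x\<in>Gset (int n ^ 2) m. \<Sum>z\<in>Gset (int n ^ 2) m.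
      (if x \<in> Gset (int n ^ 2) m then Y (x, z) * q powi (dotp m b x + dotp m c x + dotp m d z) else 0))"
    by (subst sum.swap) (simp add: finite_Gset)
  also have "\<dots> = (\<Sum>x\<in>Gset (int n ^ 2) m. \<Sum>z\<in>Gset (int n ^ 2) m. Y (x, z) * q powi (dotp m (\<lambda>i. b i + c i) x + dotp m d z))"
    by (simp add: dotp_add)
  also have "\<dots> = f2.tr Y (\<lambda>i. b i + c i, d)"
    unfolding f2.tr_def sum_times_split by simp
  finally show ?thesis .
qed

lemma dotp_period: "\<forall>i. int n ^ 2 dvd (b i - b' i) \<Longrightarrow> int n ^ 2 dvd (dotp m b x - dotp m b' x)"
proof -
  assume h: "\<forall>i. int n ^ 2 dvd (b i - b' i)"
  have "dotp m b x - dotp m b' x = (\<Sum>i<m. (b i - b' i) * x i)"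
    by (simp add: dotp_def sum_subtractf left_diff_distrib)
  also have "int n ^ 2 dvd \<dots>" using h by (intro dvd_sum dvd_mult2) auto
  finally show ?thesis .
qed

lemma tr2_period:
  assumes "\<forall>i. int n ^ 2 dvd (b i - b' i)" "\<forall>i. int n ^ 2 dvd (c i - c' i)"
  shows "f2.tr Y (b, c) = f2.tr Y (b', c')"
proof -
  have h: "q powi (dotp m b x + dotp m c y) = q powi (dotp m b' x + dotp m c' y)" for x y
  proof (rule powi_N)
    have "dotp m b x + dotp m c y - (dotp m b' x + dotp m c' y) = (dotp m b x - dotp m b' x) + (dotp m c y - dotp m c' y)"
      by simp
    also have "int n ^ 2 dvd \<dots>" using dotp_period[OF assms(1)] dotp_period[OF assms(2)] by simp
    finally show "int n ^ 2 dvd dotp m b x + dotp m c y - (dotp m b' x + dotp m c' y)" .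
  qed
  show ?thesis unfolding f2.tr_def using h by (auto intro!: sum.cong)
qed

definition vaddN :: "(nat \<Rightarrow> int) \<Rightarrow> (nat \<Rightarrow> int) \<Rightarrow> nat \<Rightarrow> int" where
  "vaddN c d = (\<lambda>i. (c i + d i) mod int n ^ 2)"

lemma vaddN_in: "c \<in> Gset (int n ^ 2) m \<Longrightarrow> d \<in> Gset (int n ^ 2) m \<Longrightarrow> vaddN c d \<in> Gset (int n ^ 2) m"
  using n2 unfolding Gset_def vaddN_def by auto

lemma vaddN_dvd: "\<forall>i. int n ^ 2 dvd ((c i + d i) - vaddN c d i)"
  unfolding vaddN_def by (simp add: mod_eq_dvd_iff[symmetric])

end

context sett begin

lemma T1v: "b \<in> Gset (int n ^ 2) m \<Longrightarrow> c \<in> Gset (int n ^ 2) m \<Longrightarrow> d \<in> Gset (int n ^ 2) m \<Longrightarrow>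
  f3.tr (one_tensor (f2.E (coef a))) (b, c, d) = coef a (c, d)"
  by (simp add: tr_one_tensor f2.tr_E)

lemma T4v: "b \<in> Gset (int n ^ 2) m \<Longrightarrow> c \<in> Gset (int n ^ 2) m \<Longrightarrow> d \<in> Gset (int n ^ 2) m \<Longrightarrow>
  f3.tr (tensor_one (f2.E (\<lambda>p. 1 / coef a p))) (b, c, d) = 1 / coef a (b, c)"
  by (simp add: tr_tensor_one f2.tr_E)

lemma T2v: "b \<in> Gset (int n ^ 2) m \<Longrightarrow> c \<in> Gset (int n ^ 2) m \<Longrightarrow> d \<in> Gset (int n ^ 2) m \<Longrightarrow>
  f3.tr (id_Delta (f2.E (coef a))) (b, c, d) = coef a (b, vaddN c d)"
proof -
  assume b: "b \<in> Gset (int n ^ 2) m" and c: "c \<in> Gset (int n ^ 2) m" and d: "d \<in> Gset (int n ^ 2) m"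
  have "f3.tr (id_Delta (f2.E (coef a))) (b, c, d) = f2.tr (f2.E (coef a)) (b, vaddN c d)"
    unfolding tr_id_Delta by (rule tr2_period) (simp_all add: vaddN_dvd)
  also have "\<dots> = coef a (b, vaddN c d)" using b c d vaddN_in by (simp add: f2.tr_E)
  finally show ?thesis .
qed

lemma T3v: "b \<in> Gset (int n ^ 2) m \<Longrightarrow> c \<in> Gset (int n ^ 2) m \<Longrightarrow> d \<in> Gset (int n ^ 2) m \<Longrightarrow>
  f3.tr (Delta_id (f2.E (\<lambda>p. 1 / coef a p))) (b, c, d) = 1 / coef a (vaddN b c, d)"
proof -
  assume b: "b \<in> Gset (int n ^ 2) m" and c: "c \<in> Gset (int n ^ 2) m" and d: "d \<in> Gset (int n ^ 2) m"
  have "f3.tr (Delta_id (f2.E (\<lambda>p. 1 / coef a p))) (b, c, d) = f2.tr (f2.E (\<lambda>p. 1 / coef a p)) (vaddN b c, d)"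
    unfolding tr_Delta_id by (rule tr2_period) (simp_all add: vaddN_dvd)
  also have "\<dots> = 1 / coef a (vaddN b c, d)" using b c d vaddN_in by (simp add: f2.tr_E)
  finally show ?thesis .
qed

lemma coef_exp: "coef a (b, c) = q powi (\<Sum>i<m. \<Sum>j<m. - b i * (c j - c j mod int n) * a i j)"
  unfolding coef_def cfun_def by (simp add: powi_sum[OF q0] flip: power_int_mult)

lemma inv_powi: "1 / q powi e = q powi (- e)"
  by (simp add: power_int_minus divide_inverse)

lemma coef_combine:
  "coef a (c, d) * coef a (b, vaddN c d) * (1 / coef a (vaddN b c, d)) * (1 / coef a (b, c))
   = (\<Prod>i<m. \<Prod>j<m. q powi (a i j * (b i mod int n) * ((c j mod int n + d j mod int n) mod int n - c j mod int n - d j mod int n)))"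
proof -
  define S1 where "S1 = (\<Sum>i<m. \<Sum>j<m. - c i * (d j - d j mod int n) * a i j)"
  define S2 where "S2 = (\<Sum>i<m. \<Sum>j<m. - b i * (vaddN c d j - vaddN c d j mod int n) * a i j)"
  define S3 where "S3 = (\<Sum>i<m. \<Sum>j<m. - vaddN b c i * (d j - d j mod int n) * a i j)"
  define S4 where "S4 = (\<Sum>i<m. \<Sum>j<m. - b i * (c j - c j mod int n) * a i j)"
  define S5 where "S5 = (\<Sum>i<m. \<Sum>j<m. a i j * (b i mod int n) * ((c j mod int n + d j mod int n) mod int n - c j mod int n - d j mod int n))"
  have L: "coef a (c, d) * coef a (b, vaddN c d) * (1 / coef a (vaddN b c, d)) * (1 / coef a (b, c))
      = q powi (S1 + S2 + - S3 + - S4)"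
    unfolding coef_exp inv_powi S1_def S2_def S3_def S4_def by (simp only: powi_add')
  have R: "(\<Prod>i<m. \<Prod>j<m. q powi (a i j * (b i mod int n) * ((c j mod int n + d j mod int n) mod int n - c j mod int n - d j mod int n)))
      = q powi S5"
    unfolding S5_def by (simp add: powi_sum[OF q0])
  have "q powi (S1 + S2 + - S3 + - S4) = q powi S5"
  proof (rule powi_N)
    have "S1 + S2 + - S3 + - S4 - S5 = (\<Sum>i<m. \<Sum>j<m.
        - c i * (d j - d j mod int n) * a i j + - b i * (vaddN c d j - vaddN c d j mod int n) * a i j
        - - vaddN b c i * (d j - d j mod int n) * a i j - - b i * (c j - c j mod int n) * a i j
        - a i j * (b i mod int n) * ((c j mod int n + d j mod int n) mod int n - c j mod int n - d j mod int n))"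
      unfolding S1_def S2_def S3_def S4_def S5_def by (simp add: sum.distrib sum_subtractf sum_negf)
    also have "int n ^ 2 dvd \<dots>"
    proof (intro dvd_sum)
      fix i j
      have "int n > 0" using n2 by simp
      from int_key[OF this, where E = "c i" and Dd = "d j" and B = "b i" and C = "c j" and a = "a i j"]
      show "int n ^ 2 dvd (- c i * (d j - d j mod int n) * a i j + - b i * (vaddN c d j - vaddN c d j mod int n) * a i j
        - - vaddN b c i * (d j - d j mod int n) * a i j - - b i * (c j - c j mod int n) * a i j
        - a i j * (b i mod int n) * ((c j mod int n + d j mod int n) mod int n - c j mod int n - d j mod int n))"
        by (simp add: vaddN_def)
    qed
    finally show "int n ^ 2 dvd S1 + S2 + - S3 + - S4 - S5" .
  qed
  then show ?thesis using L R by simp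
qed

end

context sett begin

definition bm :: "(nat \<Rightarrow> int) \<Rightarrow> nat \<Rightarrow> int" where
  "bm b = (\<lambda>i. b i mod int n)"

lemma n0: "int n > 0" using n2 by simp

lemma Gn_range: "b \<in> Gset (int n) m \<Longrightarrow> 0 \<le> b i \<and> b i < int n"
  using n0 unfolding Gset_def by (cases "i < m") auto

lemma G_range: "b \<in> Gset (int n ^ 2) m \<Longrightarrow> 0 \<le> b i \<and> b i < int n ^ 2"
  using n0 unfolding Gset_def by (cases "i < m") auto

lemma div_lt: "0 \<le> (x::int) \<Longrightarrow> x < int n ^ 2 \<Longrightarrow> x div int n < int n"
proof (rule ccontr)
  assume x: "0 \<le> x" "x < int n ^ 2" and "\<not> x div int n < int n"
  then have "int n * int n \<le> int n * (x div int n)" using n0 by (intro mult_left_mono) auto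
  also have "\<dots> \<le> x"
  proof -
    have "x = int n * (x div int n) + x mod int n" by simp
    moreover have "x mod int n \<ge> 0" using n0 by simp
    ultimately show ?thesis by linarith
  qed
  finally show False using x by (simp add: power2_eq_square)
qed

lemma comb_in: "b0 \<in> Gset (int n) m \<Longrightarrow> b1 \<in> Gset (int n) m \<Longrightarrow> (\<lambda>i. b0 i + int n * b1 i) \<in> Gset (int n ^ 2) m"
proof -
  assume b0: "b0 \<in> Gset (int n) m" and b1: "b1 \<in> Gset (int n) m"
  have "b0 i + int n * b1 i < int n ^ 2" for i
  proof -
    have "int n * b1 i \<le> int n * (int n - 1)" using Gn_range[OF b1, of i] n0 by (intro mult_left_mono) auto
    then show ?thesis using Gn_range[OF b0, of i] by (simp add: power2_eq_square algebra_simps)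
  qed
  then show ?thesis using b0 b1 Gn_range[OF b0] Gn_range[OF b1] n0 unfolding Gset_def by auto
qed

lemma LG: "(\<Sum>b\<in>Gset (int n ^ 2) m. H b) = (\<Sum>b0\<in>Gset (int n) m. \<Sum>b1\<in>Gset (int n) m. H (\<lambda>i. b0 i + int n * b1 i))"
proof -
  have "(\<Sum>b0\<in>Gset (int n) m. \<Sum>b1\<in>Gset (int n) m. H (\<lambda>i. b0 i + int n * b1 i))
      = (\<Sum>p\<in>Gset (int n) m \<times> Gset (int n) m. H (\<lambda>i. fst p i + int n * snd p i))"
    by (simp add: sum_times_split)
  also have "\<dots> = (\<Sum>b\<in>Gset (int n ^ 2) m. H b)"
  proof (rule sum.reindex_bij_witness[where j = "\<lambda>p i. fst p i + int n * snd p i" and i = "\<lambda>b. (bm b, \<lambda>i. b i div int n)"])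
    fix p assume p: "p \<in> Gset (int n) m \<times> Gset (int n) m"
    then obtain b0 b1 where pe: "p = (b0, b1)" and b0: "b0 \<in> Gset (int n) m" and b1: "b1 \<in> Gset (int n) m" by auto
    show "(\<lambda>i. fst p i + int n * snd p i) \<in> Gset (int n ^ 2) m" using comb_in[OF b0 b1] pe by simp
    have "bm (\<lambda>i. b0 i + int n * b1 i) = b0"
      unfolding bm_def using Gn_range[OF b0] by (auto intro!: ext)
    moreover have "(\<lambda>i. (b0 i + int n * b1 i) div int n) = b1"
      using Gn_range[OF b0] n0 by (auto intro!: ext)
    ultimately show "(bm (\<lambda>i. fst p i + int n * snd p i), \<lambda>ia. (fst p ia + int n * snd p ia) div int n) = p"
      using pe by simp
  next
    fix b assume b: "b \<in> Gset (int n ^ 2) m"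
    show "(\<lambda>i. fst (bm b, \<lambda>i. b i div int n) i + int n * snd (bm b, \<lambda>i. b i div int n) i) = b"
      by (simp add: bm_def)
    show "(bm b, \<lambda>i. b i div int n) \<in> Gset (int n) m \<times> Gset (int n) m"
      using b G_range[OF b] div_lt n0 unfolding Gset_def bm_def by (auto simp: pos_imp_zdiv_nonneg_iff)
  qed simp
  finally show ?thesis by simp
qed

lemma qn_root: "(q ^ n) ^ n = 1" "\<forall>k. 0 < k \<and> k < n \<longrightarrow> (q ^ n) ^ k \<noteq> 1"
proof -
  show "(q ^ n) ^ n = 1" using qN by (simp add: power_mult[symmetric] power2_eq_square)
  show "\<forall>k. 0 < k \<and> k < n \<longrightarrow> (q ^ n) ^ k \<noteq> 1"
  proof (intro allI impI)
    fix k assume k: "0 < k \<and> k < n"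
    then have "0 < n * k" "n * k < n ^ 2" using n2 by (auto simp: power2_eq_square)
    then show "(q ^ n) ^ k \<noteq> 1" using prim by (simp add: power_mult[symmetric])
  qed
qed

lemma orth_small:
  "(\<Sum>y\<in>Gset (int n) m. (q ^ n) powi (\<Sum>i<m. t i * y i))
       = (if \<forall>i<m. int n dvd t i then of_nat n ^ m else 0)"
  using orth_Gset[where M = n and w = "q ^ n" and m = m and t = t] qn_root n2 by simp

lemma smallidem_A:
  assumes h: "h \<in> Gset (int n) m"
  shows "smallidem q n m b0 (\<lambda>i. int n * h i) = q powi (- (int n * dotp m b0 h)) / of_nat n ^ m"
proof -
  have "smallidem q n m b0 (\<lambda>i. int n * h i)
      = (\<Sum>h'\<in>Gset (int n) m. if h' = h then q powi (- (int n * dotp m b0 h')) / of_nat n ^ m else 0)"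
    unfolding smallidem_def
  proof (rule sum.cong[OF refl])
    fix h' 
    have "(\<lambda>i. int n * h' i) = (\<lambda>i. int n * h i) \<longleftrightarrow> h' = h"
    proof
      assume "(\<lambda>i. int n * h' i) = (\<lambda>i. int n * h i)"
      then show "h' = h" using n0 by (auto intro!: ext dest: fun_cong)
    qed simp
    then show "q powi - (int n * dotp m b0 h') / complex_of_nat n ^ m * gelem (\<lambda>i. int n * h' i) (\<lambda>i. int n * h i) =
         (if h' = h then q powi - (int n * dotp m b0 h') / complex_of_nat n ^ m else 0)"
      by (auto simp: gelem_def)
  qed
  also have "\<dots> = q powi (- (int n * dotp m b0 h)) / of_nat n ^ m" using h finite_Gset by simp
  finally show ?thesis .
qed

lemma smallidem_B:
  assumes "\<not> (\<exists>h\<in>Gset (int n) m. x = (\<lambda>i. int n * h i))"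
  shows "smallidem q n m b0 x = 0"
  unfolding smallidem_def gelem_def using assms by (auto intro!: sum.neutral)

lemma nh_in: "h \<in> Gset (int n) m \<Longrightarrow> (\<lambda>i. int n * h i) \<in> Gset (int n ^ 2) m"
proof -
  assume h: "h \<in> Gset (int n) m"
  have z: "(\<lambda>i. 0) \<in> Gset (int n) m" using n0 by (simp add: Gset_def)
  show ?thesis using comb_in[OF z h] by simp
qed

lemma SF:
  assumes b0: "b0 \<in> Gset (int n) m"
  shows "(\<Sum>b1\<in>Gset (int n) m. bigidem q n m (\<lambda>i. b0 i + int n * b1 i) x) = smallidem q n m b0 x"
proof (cases "x \<in> Gset (int n ^ 2) m")
  case False
  have "\<not> (\<exists>h\<in>Gset (int n) m. x = (\<lambda>i. int n * h i))"
  proof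
    assume "\<exists>h\<in>Gset (int n) m. x = (\<lambda>i. int n * h i)"
    then show False
    proof
      fix h assume "h \<in> Gset (int n) m" and xh: "x = (\<lambda>i. int n * h i)"
      from False nh_in[OF this(1)] show False unfolding xh by (rule notE)
    qed
  qed
  then have s0: "smallidem q n m b0 x = 0" by (rule smallidem_B)
  have "bigidem q n m (\<lambda>i. b0 i + int n * b1 i) x = 0" for b1
    using False by (simp add: bigidem_eval)
  then show ?thesis unfolding s0 by simp
next
  case True
  have "(\<Sum>b1\<in>Gset (int n) m. bigidem q n m (\<lambda>i. b0 i + int n * b1 i) x)
      = (\<Sum>b1\<in>Gset (int n) m. q powi (- dotp m b0 x) / of_nat n ^ (2 * m) * (q ^ n) powi (\<Sum>i<m. (- x i) * b1 i))"
  proof (rule sum.cong[OF refl])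
    fix b1
    have e: "- dotp m (\<lambda>i. b0 i + int n * b1 i) x = - dotp m b0 x + int n * (\<Sum>i<m. (- x i) * b1 i)"
      by (simp add: dotp_def sum.distrib sum_distrib_left algebra_simps sum_negf)
    have "q powi (- dotp m (\<lambda>i. b0 i + int n * b1 i) x) = q powi (- dotp m b0 x) * (q ^ n) powi (\<Sum>i<m. (- x i) * b1 i)"
      unfolding e by (simp only: powi_add' power_int_mult power_int_of_nat)
    then show "bigidem q n m (\<lambda>i. b0 i + int n * b1 i) x = q powi (- dotp m b0 x) / of_nat n ^ (2 * m) * (q ^ n) powi (\<Sum>i<m. (- x i) * b1 i)"
      using True by (simp add: bigidem_eval)
  qed
  also have "\<dots> = q powi (- dotp m b0 x) / of_nat n ^ (2 * m) * (if \<forall>i<m. int n dvd (- x i) then of_nat n ^ m else 0)"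
    by (subst sum_distrib_left[symmetric]) (subst orth_small, rule refl)
  also have "\<dots> = smallidem q n m b0 x"
  proof (cases "\<forall>i<m. int n dvd (- x i)")
    case dv: True
    define h where "h = (\<lambda>i. x i div int n)"
    have xh: "x = (\<lambda>i. int n * h i)"
    proof
      fix i show "x i = int n * h i"
        using dv True unfolding h_def Gset_def by (cases "i < m") auto
    qed
    have hG: "h \<in> Gset (int n) m"
      using True div_lt n0 unfolding h_def Gset_def by (auto simp: pos_imp_zdiv_nonneg_iff)
    have dx: "dotp m b0 x = int n * dotp m b0 h" unfolding xh dotp_def by (simp add: sum_distrib_left mult_ac)
    have D: "(of_nat n ^ (2*m) :: complex) = of_nat n ^ m * of_nat n ^ m" by (simp add: mult_2 power_add)
    have A0: "(of_nat n ^ m :: complex) \<noteq> 0" using n2 by simp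
    have fs: "Q / (A * A) * A = Q / A" if "A \<noteq> 0" for Q A :: complex using that by (simp add: field_simps)
    have "q powi (- dotp m b0 x) / of_nat n ^ (2 * m) * (if \<forall>i<m. int n dvd (- x i) then of_nat n ^ m else 0)
        = q powi (- (int n * dotp m b0 h)) / of_nat n ^ m"
      using dv unfolding D dx by (simp add: fs[OF A0])
    also have "\<dots> = smallidem q n m b0 x" unfolding xh by (rule smallidem_A[OF hG, symmetric])
    finally show ?thesis .
  next
    case ndv: False
    have "\<not> (\<exists>h\<in>Gset (int n) m. x = (\<lambda>i. int n * h i))"
    proof
      assume "\<exists>h\<in>Gset (int n) m. x = (\<lambda>i. int n * h i)"
      then show False
      proof
        fix h assume "h \<in> Gset (int n) m" and xh: "x = (\<lambda>i. int n * h i)"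
        have "\<forall>i<m. int n dvd (- x i)" unfolding xh by simp
        from ndv this show False by (rule notE)
      qed
    qed
    then have s0: "smallidem q n m b0 x = 0" by (rule smallidem_B)
    have e0: "(if \<forall>i<m. int n dvd (- x i) then (of_nat n ^ m :: complex) else 0) = 0"
      by (rule if_not_P[OF ndv])
    show ?thesis unfolding e0 s0 by simp
  qed
  finally show ?thesis .
qed

lemma SF':
  "(\<Sum>b\<in>Gset (int n ^ 2) m. \<phi> (bm b) * bigidem q n m b x) = (\<Sum>b0\<in>Gset (int n) m. \<phi> b0 * smallidem q n m b0 x)"
proof -
  have "(\<Sum>b\<in>Gset (int n ^ 2) m. \<phi> (bm b) * bigidem q n m b x)
      = (\<Sum>b0\<in>Gset (int n) m. \<Sum>b1\<in>Gset (int n) m. \<phi> (bm (\<lambda>i. b0 i + int n * b1 i)) * bigidem q n m (\<lambda>i. b0 i + int n * b1 i) x)"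
    by (rule LG)
  also have "\<dots> = (\<Sum>b0\<in>Gset (int n) m. \<phi> b0 * smallidem q n m b0 x)"
  proof (rule sum.cong[OF refl])
    fix b0 assume b0: "b0 \<in> Gset (int n) m"
    have bb: "bm (\<lambda>i. b0 i + int n * b1 i) = b0" for b1
      unfolding bm_def using Gn_range[OF b0] by (auto intro!: ext)
    have "(\<Sum>b1\<in>Gset (int n) m. \<phi> (bm (\<lambda>i. b0 i + int n * b1 i)) * bigidem q n m (\<lambda>i. b0 i + int n * b1 i) x)
        = (\<Sum>b1\<in>Gset (int n) m. \<phi> b0 * bigidem q n m (\<lambda>i. b0 i + int n * b1 i) x)"
      unfolding bb ..
    also have "\<dots> = \<phi> b0 * (\<Sum>b1\<in>Gset (int n) m. bigidem q n m (\<lambda>i. b0 i + int n * b1 i) x)"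
      by (rule sum_distrib_left[symmetric])
    also have "\<dots> = \<phi> b0 * smallidem q n m b0 x" unfolding SF[OF b0] ..
    finally show "(\<Sum>b1\<in>Gset (int n) m. \<phi> (bm (\<lambda>i. b0 i + int n * b1 i)) * bigidem q n m (\<lambda>i. b0 i + int n * b1 i) x)
        = \<phi> b0 * smallidem q n m b0 x" .
  qed
  finally show ?thesis .
qed

end

context sett begin

lemma E3_nested:
  "f3.E H (x, y, z) = (\<Sum>b\<in>Gset (int n ^ 2) m. \<Sum>c\<in>Gset (int n ^ 2) m. \<Sum>d\<in>Gset (int n ^ 2) m.
     H (b, c, d) * bigidem q n m b x * bigidem q n m c y * bigidem q n m d z)"
proof (cases "x \<in> Gset (int n ^ 2) m \<and> y \<in> Gset (int n ^ 2) m \<and> z \<in> Gset (int n ^ 2) m")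
  case True
  have "(\<Sum>b\<in>Gset (int n ^ 2) m. \<Sum>c\<in>Gset (int n ^ 2) m. \<Sum>d\<in>Gset (int n ^ 2) m.
     H (b, c, d) * bigidem q n m b x * bigidem q n m c y * bigidem q n m d z)
    = (\<Sum>b\<in>Gset (int n ^ 2) m. \<Sum>c\<in>Gset (int n ^ 2) m. \<Sum>d\<in>Gset (int n ^ 2) m.
        H (b, c, d) * q powi (- (dotp m b x + dotp m c y + dotp m d z))
          / (of_nat n ^ (2 * m) * of_nat n ^ (2 * m) * of_nat n ^ (2 * m)))"
    using True by (auto simp: bigidem_eval powi_add' powi_diff' intro!: sum.cong)
  also have "\<dots> = f3.E H (x, y, z)"
    unfolding f3.E_def using True by (simp add: sum_times3_split sum_divide_distrib)
  finally show ?thesis by simp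
next
  case False
  then show ?thesis by (auto simp: bigidem_eval f3.E_out)
qed

lemma collapse:
  "(\<Sum>b\<in>Gset (int n ^ 2) m. \<Sum>c\<in>Gset (int n ^ 2) m. \<Sum>d\<in>Gset (int n ^ 2) m.
      Gc (bm b) (bm c) (bm d) * bigidem q n m b x * bigidem q n m c y * bigidem q n m d z)
   = (\<Sum>b\<in>Gset (int n) m. \<Sum>c\<in>Gset (int n) m. \<Sum>d\<in>Gset (int n) m.
      Gc b c d * smallidem q n m b x * smallidem q n m c y * smallidem q n m d z)"
proof -
  let ?G = "Gset (int n ^ 2) m" and ?H = "Gset (int n) m"
  let ?B = "bigidem q n m" and ?S = "smallidem q n m"
  have "(\<Sum>b\<in>?G. \<Sum>c\<in>?G. \<Sum>d\<in>?G. Gc (bm b) (bm c) (bm d) * ?B b x * ?B c y * ?B d z)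
      = (\<Sum>b\<in>?G. (\<Sum>c\<in>?G. (\<Sum>d\<in>?G. Gc (bm b) (bm c) (bm d) * ?B d z) * ?B c y) * ?B b x)"
    by (simp add: sum_distrib_left sum_distrib_right mult_ac)
  also have "\<dots> = (\<Sum>b\<in>?G. (\<Sum>c\<in>?G. (\<Sum>d0\<in>?H. Gc (bm b) (bm c) d0 * ?S d0 z) * ?B c y) * ?B b x)"
    by (simp only: SF'[where \<phi> = "\<lambda>d0. Gc (bm _) (bm _) d0"])
  also have "\<dots> = (\<Sum>b\<in>?G. (\<Sum>c0\<in>?H. (\<Sum>d0\<in>?H. Gc (bm b) c0 d0 * ?S d0 z) * ?S c0 y) * ?B b x)"
    by (simp only: SF'[where \<phi> = "\<lambda>c0. \<Sum>d0\<in>?H. Gc (bm _) c0 d0 * ?S d0 z"])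
  also have "\<dots> = (\<Sum>b0\<in>?H. (\<Sum>c0\<in>?H. (\<Sum>d0\<in>?H. Gc b0 c0 d0 * ?S d0 z) * ?S c0 y) * ?S b0 x)"
    by (simp only: SF'[where \<phi> = "\<lambda>b0. \<Sum>c0\<in>?H. (\<Sum>d0\<in>?H. Gc b0 c0 d0 * ?S d0 z) * ?S c0 y"])
  also have "\<dots> = (\<Sum>b\<in>?H. \<Sum>c\<in>?H. \<Sum>d\<in>?H. Gc b c d * ?S b x * ?S c y * ?S d z)"
    by (simp add: sum_distrib_left sum_distrib_right mult_ac)
  finally show ?thesis .
qed

lemma Phi_eq:
  "Phi q n m a = (\<lambda>(x, y, z). \<Sum>b\<in>Gset (int n) m. \<Sum>c\<in>Gset (int n) m. \<Sum>d\<in>Gset (int n) m.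
         (\<Prod>i<m. \<Prod>j<m. q powi (a i j * b i * ((c j + d j) mod int n - c j - d j)))
         * smallidem q n m b x * smallidem q n m c y * smallidem q n m d z)"
proof -
  define Gc where "Gc = (\<lambda>b c d. \<Prod>i<m. \<Prod>j<m. q powi (a i j * b i * ((c j + d j) mod int n - c j - d j)))"
  have J: "Jtw q n m a = f2.E (coef a)" by (rule Jtw_E)
  have Ji: "inv2 (int n ^ 2) m (Jtw q n m a) = f2.E (\<lambda>p. 1 / coef a p)" unfolding J by (rule inv_E)
  have "Phi q n m a = conv (Gset (int n ^ 2) m \<times> Gset (int n ^ 2) m \<times> Gset (int n ^ 2) m)
      (\<lambda>(x1, x2, x3) (y1, y2, y3). (vsub (int n ^ 2) x1 y1, vsub (int n ^ 2) x2 y2, vsub (int n ^ 2) x3 y3))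
      (conv (Gset (int n ^ 2) m \<times> Gset (int n ^ 2) m \<times> Gset (int n ^ 2) m)
      (\<lambda>(x1, x2, x3) (y1, y2, y3). (vsub (int n ^ 2) x1 y1, vsub (int n ^ 2) x2 y2, vsub (int n ^ 2) x3 y3))
      (conv (Gset (int n ^ 2) m \<times> Gset (int n ^ 2) m \<times> Gset (int n ^ 2) m)
      (\<lambda>(x1, x2, x3) (y1, y2, y3). (vsub (int n ^ 2) x1 y1, vsub (int n ^ 2) x2 y2, vsub (int n ^ 2) x3 y3))
      (one_tensor (f2.E (coef a))) (id_Delta (f2.E (coef a))))
      (Delta_id (f2.E (\<lambda>p. 1 / coef a p)))) (tensor_one (f2.E (\<lambda>p. 1 / coef a p)))"
    unfolding Phi_def Let_def mult3_def J inv_E ..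
  also have "\<dots> = f3.E (\<lambda>p. f3.tr (one_tensor (f2.E (coef a))) p * f3.tr (id_Delta (f2.E (coef a))) p
       * f3.tr (Delta_id (f2.E (\<lambda>p. 1 / coef a p))) p * f3.tr (tensor_one (f2.E (\<lambda>p. 1 / coef a p))) p)"
    by (rule f3.conv4) (intro supp_id_Delta supp_Delta_id supp_tensor_one allI impI f2.E_out; assumption)+
  also have "\<dots> = f3.E (\<lambda>(b, c, d). Gc (bm b) (bm c) (bm d))"
  proof (rule f3.E_cong)
    fix p assume "p \<in> Gset (int n ^ 2) m \<times> Gset (int n ^ 2) m \<times> Gset (int n ^ 2) m"
    then obtain b c d where p: "p = (b, c, d)" and b: "b \<in> Gset (int n ^ 2) m"
      and c: "c \<in> Gset (int n ^ 2) m" and d: "d \<in> Gset (int n ^ 2) m" by auto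
    show "f3.tr (one_tensor (f2.E (coef a))) p * f3.tr (id_Delta (f2.E (coef a))) p
       * f3.tr (Delta_id (f2.E (\<lambda>p. 1 / coef a p))) p * f3.tr (tensor_one (f2.E (\<lambda>p. 1 / coef a p))) p
       = (\<lambda>(b, c, d). Gc (bm b) (bm c) (bm d)) p"
    proof -
      have "f3.tr (one_tensor (f2.E (coef a))) p * f3.tr (id_Delta (f2.E (coef a))) p
       * f3.tr (Delta_id (f2.E (\<lambda>p. 1 / coef a p))) p * f3.tr (tensor_one (f2.E (\<lambda>p. 1 / coef a p))) p
        = coef a (c, d) * coef a (b, vaddN c d) * (1 / coef a (vaddN b c, d)) * (1 / coef a (b, c))"
        by (simp only: p T1v[OF b c d] T2v[OF b c d] T3v[OF b c d] T4v[OF b c d])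
      also have "\<dots> = Gc (bm b) (bm c) (bm d)" unfolding coef_combine by (simp add: Gc_def bm_def)
      also have "\<dots> = (\<lambda>(b, c, d). Gc (bm b) (bm c) (bm d)) p" by (simp add: p)
      finally show ?thesis .
    qed
  qed
  finally have Ph: "Phi q n m a = f3.E (\<lambda>(b, c, d). Gc (bm b) (bm c) (bm d))" .
  show ?thesis
  proof (rule ext, clarify)
    fix x y z
    show "Phi q n m a (x, y, z) = (\<Sum>b\<in>Gset (int n) m. \<Sum>c\<in>Gset (int n) m. \<Sum>d\<in>Gset (int n) m.
         (\<Prod>i<m. \<Prod>j<m. q powi (a i j * b i * ((c j + d j) mod int n - c j - d j)))
         * smallidem q n m b x * smallidem q n m c y * smallidem q n m d z)"
      unfolding Ph E3_nested using collapse[of Gc x y z] by (simp add: Gc_def)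
  qed
qed

lemma smallidem_dvd: "smallidem q n m b x \<noteq> 0 \<Longrightarrow> int n dvd x i"
proof -
  assume h: "smallidem q n m b x \<noteq> 0"
  have "\<exists>h\<in>Gset (int n) m. x = (\<lambda>i. int n * h i)"
  proof (rule ccontr)
    assume "\<not> (\<exists>h\<in>Gset (int n) m. x = (\<lambda>i. int n * h i))"
    from smallidem_B[OF this, of b] h show False by (rule notE[rotated])
  qed
  then show ?thesis by auto
qed

end

theorem lemma4p2:
  fixes q :: complex and n m :: nat and a :: "nat \<Rightarrow> nat \<Rightarrow> int"
  assumes "n \<ge> 2" and "m \<ge> 1"
    and "q ^ (n^2) = 1" and "\<forall>k. 0 < k \<and> k < n^2 \<longrightarrow> q ^ k \<noteq> 1"
  shows "Phi q n m a =
      (\<lambda>(x, y, z). \<Sum>b\<in>Gset (int n) m. \<Sum>c\<in>Gset (int n) m. \<Sum>d\<in>Gset (int n) m.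
         (\<Prod>i<m. \<Prod>j<m. q powi (a i j * b i * ((c j + d j) mod int n - c j - d j)))
         * smallidem q n m b x * smallidem q n m c y * smallidem q n m d z)
    \<and> (\<forall>x y z. Phi q n m a (x, y, z) \<noteq> 0 \<longrightarrow>
         (\<forall>i. int n dvd x i \<and> int n dvd y i \<and> int n dvd z i))"
proof -
  interpret sett q n m using assms by unfold_locales auto
  have P: "Phi q n m a =
      (\<lambda>(x, y, z). \<Sum>b\<in>Gset (int n) m. \<Sum>c\<in>Gset (int n) m. \<Sum>d\<in>Gset (int n) m.
         (\<Prod>i<m. \<Prod>j<m. q powi (a i j * b i * ((c j + d j) mod int n - c j - d j)))
         * smallidem q n m b x * smallidem q n m c y * smallidem q n m d z)"
    by (rule Phi_eq)
  have "int n dvd x i \<and> int n dvd y i \<and> int n dvd z i" if nz: "Phi q n m a (x, y, z) \<noteq> 0" for x y z i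
  proof -
    from nz have "(\<Sum>b\<in>Gset (int n) m. \<Sum>c\<in>Gset (int n) m. \<Sum>d\<in>Gset (int n) m.
         (\<Prod>i<m. \<Prod>j<m. q powi (a i j * b i * ((c j + d j) mod int n - c j - d j)))
         * smallidem q n m b x * smallidem q n m c y * smallidem q n m d z) \<noteq> 0"
      unfolding P by simp
    then obtain b c d where "(\<Prod>i<m. \<Prod>j<m. q powi (a i j * b i * ((c j + d j) mod int n - c j - d j)))
         * smallidem q n m b x * smallidem q n m c y * smallidem q n m d z \<noteq> 0"
      by (meson sum.not_neutral_contains_not_neutral)
    then have "smallidem q n m b x \<noteq> 0" "smallidem q n m c y \<noteq> 0" "smallidem q n m d z \<noteq> 0"
      by auto
    then show ?thesis using smallidem_dvd by blast
  qed
  then show ?thesis using P by blast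
qed


end
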